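(* If $p\in\mathbb{C}[\lambda]$, $m,k\in\mathcal{A}$, and $u,v\in\mathcal{A}\bar\otimes\mathcal{A}^{\mathrm{op}}$, then \[ \tau(\partial p(m)\#k)=\tau(p'(m)\,k)\quad\text{and}\quad\tau(\Delta_{u,v}p(m))=(\tau\bar\otimes\tau^{\mathrm{op}})\big(v^{\mathrm{flip}}\,\partial p'(m)\,u\big). \]
   Context: $(\mathcal{A},\tau)$ is a von Neumann algebra with faithful normal tracial state $\tau$; $\mathcal{A}^{\mathrm{op}}$ its opposite algebra; $\mathcal{A}\bar\otimes\mathcal{A}^{\mathrm{op}}$ the von Neumann tensor product with trace $\tau\bar\otimes\tau^{\mathrm{op}}$ (products taken there); $(a\otimes b)^{\mathrm{flip}}=b\otimes a$ extended $\sigma$-weakly continuously; $(a\otimes b)\#c=acb$ extended linearly. For $g(\lambda)=\sum_ic_i\lambda^i$, $\partial g(m)=\sum_ic_i\sum_{\delta_1+\delta_2=i-1}m^{\delta_1}\otimes m^{\delta_2}$, and $\Delta_{u,v}g(m)$ is the unique element of $\mathcal{A}$ such that for all $a\in\mathcal{A}$ \[ \tau(a\,\Delta_{u,v}g(m))=\sum_ic_i\sum_{\delta_1+\delta_2+\delta_3=i-2}(\tau\bar\otimes\tau^{\mathrm{op}})\big((a\otimes1)(m\otimes1)^{\delta_1}(uv^{\mathrm{flip}}+vu^{\mathrm{flip}})(1\otimes m)^{\delta_2}(m\otimes1)^{\delta_3}\big). \] *)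

theory Defs
  imports "HOL-Analysis.Analysis" "HOL-Computational_Algebra.Polynomial"
begin

text \<open>The algebra A is a type 'a with ring
operations, a complex scalar multiplication sA and an involution st.  The von Neumann
tensor product A (tensor) A^op is a type 'b (topologised by its sigma-weak topology)
with scalar multiplication sB, the elementary tensor map ten, the trace tau2 and the map flip.\<close>

definition complex_alg :: "(complex \<Rightarrow> 'a::ring_1 \<Rightarrow> 'a) \<Rightarrow> bool" where
  "complex_alg sc \<longleftrightarrow>
     (\<forall>c d x. sc c (sc d x) = sc (c * d) x) \<and> (\<forall>x. sc 1 x = x) \<and>
     (\<forall>c d x. sc (c + d) x = sc c x + sc d x) \<and>
     (\<forall>c x y. sc c (x + y) = sc c x + sc c y) \<and>
     (\<forall>c x y. sc c (x * y) = sc c x * y) \<and>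
     (\<forall>c x y. sc c (x * y) = x * sc c y)"

definition clinear_fun :: "(complex \<Rightarrow> 'a \<Rightarrow> 'a) \<Rightarrow> (complex \<Rightarrow> 'b \<Rightarrow> 'b)
    \<Rightarrow> ('a::plus \<Rightarrow> 'b::plus) \<Rightarrow> bool" where
  "clinear_fun sX sY f \<longleftrightarrow>
     (\<forall>x y. f (x + y) = f x + f y) \<and> (\<forall>c x. f (sX c x) = sY c (f x))"

definition star_alg :: "(complex \<Rightarrow> 'a::ring_1 \<Rightarrow> 'a) \<Rightarrow> ('a \<Rightarrow> 'a) \<Rightarrow> bool" where
  "star_alg sc st \<longleftrightarrow> complex_alg sc \<and>
     (\<forall>x. st (st x) = x) \<and> (\<forall>x y. st (x + y) = st x + st y) \<and>
     (\<forall>c x. st (sc c x) = sc (cnj c) (st x)) \<and> (\<forall>x y. st (x * y) = st y * st x)"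

definition faithful_tracial_state ::
  "(complex \<Rightarrow> 'a::ring_1 \<Rightarrow> 'a) \<Rightarrow> ('a \<Rightarrow> 'a) \<Rightarrow> ('a \<Rightarrow> complex) \<Rightarrow> bool" where
  "faithful_tracial_state sc st \<tau> \<longleftrightarrow>
     clinear_fun sc (*) \<tau> \<and> \<tau> 1 = 1 \<and> (\<forall>x y. \<tau> (x * y) = \<tau> (y * x)) \<and>
     (\<forall>x. Im (\<tau> (st x * x)) = 0 \<and> Re (\<tau> (st x * x)) \<ge> 0) \<and>
     (\<forall>x. \<tau> (st x * x) = 0 \<longrightarrow> x = 0)"

text \<open>Algebraic tensor product inside 'b: finite sums of elementary tensors
  (scalars are absorbed into the first factor).\<close>
definition alg_tensor :: "('a \<Rightarrow> 'a \<Rightarrow> 'b::monoid_add) \<Rightarrow> 'b set" where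
  "alg_tensor ten = {sum_list (map (\<lambda>(a, b). ten a b) xs) | xs. True}"

definition vn_tensor_op ::
  "(complex \<Rightarrow> 'a::ring_1 \<Rightarrow> 'a) \<Rightarrow> ('a \<Rightarrow> complex) \<Rightarrow>
   (complex \<Rightarrow> 'b::{ring_1,t2_space} \<Rightarrow> 'b) \<Rightarrow> ('a \<Rightarrow> 'a \<Rightarrow> 'b) \<Rightarrow>
   ('b \<Rightarrow> complex) \<Rightarrow> ('b \<Rightarrow> 'b) \<Rightarrow> bool" where
  "vn_tensor_op sA \<tau> sB ten \<tau>2 flip \<longleftrightarrow>
     complex_alg sB \<and>
     (\<forall>a a' b. ten (a + a') b = ten a b + ten a' b) \<and>
     (\<forall>a b b'. ten a (b + b') = ten a b + ten a b') \<and>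
     (\<forall>c a b. ten (sA c a) b = sB c (ten a b)) \<and>
     (\<forall>c a b. ten a (sA c b) = sB c (ten a b)) \<and>
     (\<forall>a b c d. ten a b * ten c d = ten (a * c) (d * b)) \<and>
     ten 1 1 = 1 \<and>
     closure (alg_tensor ten) = UNIV \<and>
     (\<forall>y::'b. continuous_on UNIV (\<lambda>x. x * y)) \<and> (\<forall>y::'b. continuous_on UNIV (\<lambda>x. y * x)) \<and>
     (\<forall>y::'b. continuous_on UNIV (\<lambda>x. x + y)) \<and>
     clinear_fun sB (*) \<tau>2 \<and> continuous_on UNIV \<tau>2 \<and>
     (\<forall>x y. \<tau>2 (x * y) = \<tau>2 (y * x)) \<and>
     (\<forall>a b. \<tau>2 (ten a b) = \<tau> a * \<tau> b) \<and>
     clinear_fun sB sB flip \<and> continuous_on UNIV flip \<and>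
     (\<forall>a b. flip (ten a b) = ten b a)"

definition poly_eval :: "(complex \<Rightarrow> 'a::ring_1 \<Rightarrow> 'a) \<Rightarrow> complex poly \<Rightarrow> 'a \<Rightarrow> 'a" where
  "poly_eval sA g m = (\<Sum>i\<le>degree g. sA (coeff g i) (m ^ i))"

definition nc_deriv :: "(complex \<Rightarrow> 'b::ring_1 \<Rightarrow> 'b) \<Rightarrow> ('a::ring_1 \<Rightarrow> 'a \<Rightarrow> 'b)
    \<Rightarrow> complex poly \<Rightarrow> 'a \<Rightarrow> 'b" where
  "nc_deriv sB ten g m = (\<Sum>i\<le>degree g. sB (coeff g i)
      (\<Sum>(d1, d2)\<in>{(d1, d2). d1 + d2 + 1 = i}. ten (m ^ d1) (m ^ d2)))"

text \<open>dg(m) # k, where (a (x) b) # c = a c b is extended linearly.\<close>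
definition nc_deriv_hash :: "(complex \<Rightarrow> 'a::ring_1 \<Rightarrow> 'a) \<Rightarrow> complex poly \<Rightarrow> 'a \<Rightarrow> 'a \<Rightarrow> 'a" where
  "nc_deriv_hash sA g m k = (\<Sum>i\<le>degree g. sA (coeff g i)
      (\<Sum>(d1, d2)\<in>{(d1, d2). d1 + d2 + 1 = i}. m ^ d1 * k * m ^ d2))"

definition Delta_rhs :: "('a::ring_1 \<Rightarrow> 'a \<Rightarrow> 'b::ring_1) \<Rightarrow> ('b \<Rightarrow> complex) \<Rightarrow> ('b \<Rightarrow> 'b)
    \<Rightarrow> 'b \<Rightarrow> 'b \<Rightarrow> complex poly \<Rightarrow> 'a \<Rightarrow> 'a \<Rightarrow> complex" where
  "Delta_rhs ten \<tau>2 flip u v g m a = (\<Sum>i\<le>degree g. coeff g i *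
      (\<Sum>(d1, d2, d3)\<in>{(d1, d2, d3). d1 + d2 + d3 + 2 = i}.
         \<tau>2 (ten a 1 * ten m 1 ^ d1 * (u * flip v + v * flip u) * ten 1 m ^ d2 * ten m 1 ^ d3)))"

definition is_Delta :: "('a::ring_1 \<Rightarrow> complex) \<Rightarrow> ('a \<Rightarrow> 'a \<Rightarrow> 'b::ring_1) \<Rightarrow> ('b \<Rightarrow> complex)
    \<Rightarrow> ('b \<Rightarrow> 'b) \<Rightarrow> 'b \<Rightarrow> 'b \<Rightarrow> complex poly \<Rightarrow> 'a \<Rightarrow> 'a \<Rightarrow> bool" where
  "is_Delta \<tau> ten \<tau>2 flip u v g m d \<longleftrightarrow> (\<forall>a. \<tau> (a * d) = Delta_rhs ten \<tau>2 flip u v g m a)"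

end

theory Submission imports Defs begin

lemma dense_eq:
  fixes f g :: "'b::topological_space \<Rightarrow> 'c::t2_space"
  assumes "closure S = UNIV" "continuous_on UNIV f" "continuous_on UNIV g"
    "\<And>x. x \<in> S \<Longrightarrow> f x = g x"
  shows "f x = g x"
proof -
  have "closed {x. f x = g x}" using closed_Collect_eq[OF assms(2,3)] .
  moreover have "S \<subseteq> {x. f x = g x}" using assms(4) by auto
  ultimately have "closure S \<subseteq> {x. f x = g x}" by (rule closure_minimal[rotated])
  then show ?thesis using assms(1) by auto
qed

lemma alg_tensor_ind:
  assumes "x \<in> alg_tensor ten" "\<And>a b. P (ten a b)" "P 0" "\<And>x y. P x \<Longrightarrow> P y \<Longrightarrow> P (x+y)"
  shows "P x"
proof -
  obtain xs where x: "x = sum_list (map (\<lambda>(a, b). ten a b) xs)" using assms(1) unfolding alg_tensor_def by auto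
  show ?thesis unfolding x by (induction xs) (auto simp: assms(2-4))
qed

lemma add_zero_lemma:
  fixes f :: "'a::monoid_add \<Rightarrow> 'b::cancel_comm_monoid_add"
  assumes "\<And>x y. f (x + y) = f x + f y" shows "f 0 = 0"
proof -
  have "f 0 = f 0 + f 0" using assms[of 0 0] by simp
  then show ?thesis by (metis add_cancel_right_right)
qed

lemma additive_sum:
  fixes f :: "'a::comm_monoid_add \<Rightarrow> 'b::cancel_comm_monoid_add"
  assumes "\<And>x y. f (x + y) = f x + f y" shows "f (sum g S) = (\<Sum>x\<in>S. f (g x))"
proof (cases "finite S")
  case True then show ?thesis by (induction S rule: finite_induct) (auto simp: assms add_zero_lemma[OF assms])
next
  case False then show ?thesis by (simp add: add_zero_lemma[OF assms])
qed

lemma pair_sum: "(\<Sum>(a,b)\<in>{(a,b). a + b = (n::nat)}. f a b) = (\<Sum>a\<le>n. f a (n-a))"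
  by (rule sum.reindex_bij_witness[where i="\<lambda>a. (a, n-a)" and j="fst"]) auto

lemma triple_sum: "(\<Sum>(a,b,c)\<in>{(a,b,c). a + b + c = (n::nat)}. f a b c) = (\<Sum>b\<le>n. \<Sum>a\<le>n-b. f a b (n-b-a))"
proof -
  have "(\<Sum>b\<le>n. \<Sum>a\<le>n-b. f a b (n-b-a)) = (\<Sum>(b,a)\<in>Sigma {..n} (\<lambda>b. {..n-b}). f a b (n-b-a))"
    by (rule sum.Sigma) auto
  also have "\<dots> = (\<Sum>(a,b,c)\<in>{(a,b,c). a + b + c = (n::nat)}. f a b c)"
    by (rule sum.reindex_bij_witness[where i="\<lambda>(a,b,c). (b,a)" and j="\<lambda>(b,a). (a,b,n-b-a)"]) auto
  finally show ?thesis by simp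
qed

lemma sum_rev: "(\<Sum>i\<le>(n::nat). g i) = (\<Sum>i\<le>n. g (n - i))"
  by (rule sum.reindex_bij_witness[where i="\<lambda>i. n - i" and j="\<lambda>i. n - i"]) auto

lemma coeff_extend:
  fixes f :: "nat \<Rightarrow> 'a::comm_semiring_0"
  assumes "degree g \<le> N"
  shows "(\<Sum>i\<le>degree g. coeff g i * f i) = (\<Sum>i\<le>N. coeff g i * f i)"
  apply (rule sum.mono_neutral_left) using assms apply auto by (metis le_degree mult_zero_left)

lemma pderiv_reindex:
  fixes F :: "nat \<Rightarrow> complex"
  shows "(\<Sum>j\<le>degree (pderiv p). coeff (pderiv p) j * F j) =
         (\<Sum>i\<le>degree p. coeff p i * (of_nat i * F (i - 1)))"
proof -
  have "(\<Sum>i\<le>degree p. coeff p i * (of_nat i * F (i - 1))) = (\<Sum>i\<le>Suc (degree p). coeff p i * (of_nat i * F (i - 1)))"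
    by (rule coeff_extend) simp
  also have "\<dots> = (\<Sum>j\<le>degree p. coeff p (Suc j) * (of_nat (Suc j) * F j))"
    by (subst sum.atMost_Suc_shift) simp
  also have "\<dots> = (\<Sum>j\<le>degree p. coeff (pderiv p) j * F j)"
    by (simp add: coeff_pderiv mult_ac)
  also have "\<dots> = (\<Sum>j\<le>degree (pderiv p). coeff (pderiv p) j * F j)"
    by (rule coeff_extend[symmetric]) (simp add: degree_pderiv)
  finally show ?thesis by simp
qed


lemma tensor_facts:
  fixes sA :: "complex \<Rightarrow> 'a::ring_1 \<Rightarrow> 'a"
    and sB :: "complex \<Rightarrow> 'b::{ring_1,t2_space} \<Rightarrow> 'b" and ten :: "'a \<Rightarrow> 'a \<Rightarrow> 'b"
    and \<tau>2 :: "'b \<Rightarrow> complex" and flip :: "'b \<Rightarrow> 'b"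
  assumes V: "vn_tensor_op sA \<tau> sB ten \<tau>2 flip"
  shows "flip (flip x) = x" "\<tau>2 (flip x) = \<tau>2 x" "flip (x * y) = flip y * flip x"
proof -
  have dense: "closure (alg_tensor ten) = UNIV" using V unfolding vn_tensor_op_def by blast
  have fadd: "\<And>x y. flip (x + y) = flip x + flip y" using V unfolding vn_tensor_op_def clinear_fun_def by blast
  have tadd: "\<And>x y. \<tau>2 (x + y) = \<tau>2 x + \<tau>2 y" using V unfolding vn_tensor_op_def clinear_fun_def by blast
  have f0: "flip 0 = 0" by (rule add_zero_lemma[OF fadd])
  have t0: "\<tau>2 0 = 0" by (rule add_zero_lemma[OF tadd])
  have ften: "\<And>a b. flip (ten a b) = ten b a" using V unfolding vn_tensor_op_def by blast
  have tten: "\<And>a b. \<tau>2 (ten a b) = \<tau> a * \<tau> b" using V unfolding vn_tensor_op_def by blast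
  have mten: "\<And>a b c d. ten a b * ten c d = ten (a * c) (d * b)" using V unfolding vn_tensor_op_def by blast
  have fc: "continuous_on UNIV flip" using V unfolding vn_tensor_op_def by blast
  have tc: "continuous_on UNIV \<tau>2" using V unfolding vn_tensor_op_def by blast
  have mcl: "\<And>y::'b. continuous_on UNIV (\<lambda>x. x * y)" using V unfolding vn_tensor_op_def by blast
  have mcr: "\<And>y::'b. continuous_on UNIV (\<lambda>x. y * x)" using V unfolding vn_tensor_op_def by blast
  show "flip (flip x) = x"
  proof (rule dense_eq[OF dense, where f="\<lambda>x. flip (flip x)" and g="\<lambda>x. x"])
    show "continuous_on UNIV (\<lambda>x. flip (flip x))" by (rule continuous_on_compose2[OF fc fc]) auto
    show "continuous_on UNIV (\<lambda>x. x)" by (rule continuous_on_id)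
    fix x assume "x \<in> alg_tensor ten"
    then show "flip (flip x) = x" by (rule alg_tensor_ind) (auto simp: ften f0 fadd)
  qed
  show "\<tau>2 (flip x) = \<tau>2 x"
  proof (rule dense_eq[OF dense, where f="\<lambda>x. \<tau>2 (flip x)" and g="\<tau>2"])
    show "continuous_on UNIV (\<lambda>x. \<tau>2 (flip x))" by (rule continuous_on_compose2[OF tc fc]) auto
    show "continuous_on UNIV \<tau>2" by (rule tc)
    fix x assume "x \<in> alg_tensor ten"
    then show "\<tau>2 (flip x) = \<tau>2 x" by (rule alg_tensor_ind) (auto simp: ften f0 fadd tadd tten)
  qed
  have step1: "flip (ten a b * y) = flip y * flip (ten a b)" for a b y
  proof (rule dense_eq[OF dense, where f="\<lambda>y. flip (ten a b * y)" and g="\<lambda>y. flip y * flip (ten a b)"])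
    show "continuous_on UNIV (\<lambda>y. flip (ten a b * y))" by (rule continuous_on_compose2[OF fc mcr]) auto
    show "continuous_on UNIV (\<lambda>y. flip y * flip (ten a b))" by (rule continuous_on_compose2[OF mcl fc]) auto
    fix y assume "y \<in> alg_tensor ten"
    then show "flip (ten a b * y) = flip y * flip (ten a b)"
      by (rule alg_tensor_ind) (auto simp: ften f0 fadd mten distrib_left distrib_right)
  qed
  show "flip (x * y) = flip y * flip x"
  proof (rule dense_eq[OF dense, where f="\<lambda>x. flip (x * y)" and g="\<lambda>x. flip y * flip x"])
    show "continuous_on UNIV (\<lambda>x. flip (x * y))" by (rule continuous_on_compose2[OF fc mcl]) auto
    show "continuous_on UNIV (\<lambda>x. flip y * flip x)" by (rule continuous_on_compose2[OF mcr fc]) auto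
    fix x assume "x \<in> alg_tensor ten"
    then show "flip (x * y) = flip y * flip x"
      by (rule alg_tensor_ind) (auto simp: step1 f0 fadd distrib_left distrib_right)
  qed
qed

theorem lemma3p5p6:
  fixes sA :: "complex \<Rightarrow> 'a::ring_1 \<Rightarrow> 'a" and st :: "'a \<Rightarrow> 'a" and \<tau> :: "'a \<Rightarrow> complex"
    and sB :: "complex \<Rightarrow> 'b::{ring_1,t2_space} \<Rightarrow> 'b" and ten :: "'a \<Rightarrow> 'a \<Rightarrow> 'b"
    and \<tau>2 :: "'b \<Rightarrow> complex" and flip :: "'b \<Rightarrow> 'b"
    and p :: "complex poly" and m k d :: 'a and u v :: 'b
  assumes "star_alg sA st"
    and "faithful_tracial_state sA st \<tau>"
    and "vn_tensor_op sA \<tau> sB ten \<tau>2 flip"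
    and "is_Delta \<tau> ten \<tau>2 flip u v p m d"
  shows "\<tau> (nc_deriv_hash sA p m k) = \<tau> (poly_eval sA (pderiv p) m * k) \<and>
         \<tau> d = \<tau>2 (flip v * nc_deriv sB ten (pderiv p) m * u)"
proof -
  have sAc: "complex_alg sA" using assms(1) unfolding star_alg_def by blast
  have sAmul: "\<And>c x y. sA c x * y = sA c (x * y)" using sAc unfolding complex_alg_def by metis
  have tadd: "\<And>x y. \<tau> (x + y) = \<tau> x + \<tau> y" and tsc: "\<And>c x. \<tau> (sA c x) = c * \<tau> x"
    and tcyc: "\<And>x y. \<tau> (x * y) = \<tau> (y * x)"
    using assms(2) unfolding faithful_tracial_state_def clinear_fun_def by blast+
  have V: "vn_tensor_op sA \<tau> sB ten \<tau>2 flip" by (rule assms(3))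
  have sBc: "complex_alg sB" using V unfolding vn_tensor_op_def by blast
  have sBl: "\<And>c x y. x * sB c y = sB c (x * y)" and sBr: "\<And>c x y. sB c x * y = sB c (x * y)"
    using sBc unfolding complex_alg_def by metis+
  have t2add: "\<And>x y. \<tau>2 (x + y) = \<tau>2 x + \<tau>2 y" and t2sc: "\<And>c x. \<tau>2 (sB c x) = c * \<tau>2 x"
    and t2cyc: "\<And>x y. \<tau>2 (x * y) = \<tau>2 (y * x)"
    using V unfolding vn_tensor_op_def clinear_fun_def by blast+
  have mten: "\<And>a b c d. ten a b * ten c d = ten (a * c) (d * b)" and ten11: "ten 1 1 = 1"
    using V unfolding vn_tensor_op_def by blast+
  have ften: "\<And>a b. flip (ten a b) = ten b a" using V unfolding vn_tensor_op_def by blast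
  note TF = tensor_facts[OF V]
  have inner1: "(\<Sum>(d1, d2)\<in>{(d1, d2). d1 + d2 + 1 = i}. \<tau> (m ^ d1 * k * m ^ d2)) = of_nat i * \<tau> (m ^ (i - 1) * k)" for i
  proof (cases i)
    case 0 then show ?thesis by simp
  next
    case (Suc n)
    have "{(d1, d2). d1 + d2 + 1 = i} = {(d1, d2). d1 + d2 = n}" using Suc by auto
    then have "(\<Sum>(d1, d2)\<in>{(d1, d2). d1 + d2 + 1 = i}. \<tau> (m ^ d1 * k * m ^ d2)) = (\<Sum>a\<le>n. \<tau> (m ^ a * k * m ^ (n - a)))"
      using pair_sum[of "\<lambda>d1 d2. \<tau> (m ^ d1 * k * m ^ d2)" n] by simp
    also have "\<dots> = (\<Sum>a\<le>n. \<tau> (m ^ n * k))"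
    proof (rule sum.cong[OF refl])
      fix a assume "a \<in> {..n}"
      then have "m ^ (n - a) * (m ^ a * k) = m ^ n * k"
        by (metis mult.assoc power_add le_add_diff_inverse2 atMost_iff)
      then show "\<tau> (m ^ a * k * m ^ (n - a)) = \<tau> (m ^ n * k)" using tcyc by metis
    qed
    finally show ?thesis using Suc by simp
  qed
  have P1: "\<tau> (nc_deriv_hash sA p m k) = \<tau> (poly_eval sA (pderiv p) m * k)"
  proof -
    have "\<tau> (nc_deriv_hash sA p m k) = (\<Sum>i\<le>degree p. coeff p i * (of_nat i * \<tau> (m ^ (i - 1) * k)))"
      unfolding nc_deriv_hash_def additive_sum[of \<tau>, OF tadd] tsc
      by (rule sum.cong[OF refl]) (simp only: additive_sum[of \<tau>, OF tadd] inner1[symmetric] prod.case_distrib)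
    also have "\<dots> = (\<Sum>j\<le>degree (pderiv p). coeff (pderiv p) j * \<tau> (m ^ j * k))"
      by (rule pderiv_reindex[symmetric])
    also have "\<dots> = \<tau> (poly_eval sA (pderiv p) m * k)"
      unfolding poly_eval_def sum_distrib_right additive_sum[of \<tau>, OF tadd] by (simp add: sAmul tsc)
    finally show ?thesis .
  qed
  define T where "T e1 e2 = \<tau>2 (flip v * ten (m ^ e1) (m ^ e2) * u)" for e1 e2
  have Xpow: "ten m 1 ^ n = ten (m ^ n) 1" for n
    by (induction n) (auto simp: ten11 mten)
  have Ypow: "ten 1 m ^ n = ten 1 (m ^ n)" for n
    by (induction n) (auto simp: ten11 mten power_commutes)
  have half: "\<tau>2 (ten a 1 * u * flip v * ten 1 b) = \<tau>2 (flip v * ten a b * u)" for a b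
  proof -
    have "\<tau>2 (ten a 1 * u * (flip v * ten 1 b)) = \<tau>2 (flip v * ten 1 b * (ten a 1 * u))" by (rule t2cyc)
    also have "flip v * ten 1 b * (ten a 1 * u) = flip v * (ten 1 b * ten a 1) * u" by (simp add: mult.assoc)
    finally show ?thesis by (simp add: mult.assoc mten)
  qed
  have K: "\<tau>2 (ten a 1 * (u * flip v + v * flip u) * ten 1 b) = \<tau>2 (flip v * ten a b * u) + \<tau>2 (flip v * ten b a * u)" for a b
  proof -
    have "\<tau>2 (ten a 1 * v * flip u * ten 1 b) = \<tau>2 (flip (ten a 1 * v * flip u * ten 1 b))" by (rule TF(2)[symmetric])
    also have "flip (ten a 1 * v * flip u * ten 1 b) = ten b 1 * u * flip v * ten 1 a"
      by (simp add: TF ften mult.assoc)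
    finally have "\<tau>2 (ten a 1 * v * flip u * ten 1 b) = \<tau>2 (flip v * ten b a * u)" using half by simp
    then show ?thesis using half[of a b] by (simp add: distrib_left distrib_right t2add mult.assoc)
  qed
  have K2: "\<tau>2 (1 * ten m 1 ^ d1 * (u * flip v + v * flip u) * ten 1 m ^ d2 * ten m 1 ^ d3) = T (d1 + d3) d2 + T d2 (d1 + d3)" for d1 d2 d3
  proof -
    let ?W = "u * flip v + v * flip u"
    have "\<tau>2 (1 * ten m 1 ^ d1 * ?W * ten 1 m ^ d2 * ten m 1 ^ d3) = \<tau>2 (ten (m ^ d3) 1 * (ten (m ^ d1) 1 * ?W * ten 1 (m ^ d2)))"
    proof -
      have "1 * ten m 1 ^ d1 * ?W * ten 1 m ^ d2 * ten m 1 ^ d3 = (ten (m ^ d1) 1 * ?W * ten 1 (m ^ d2)) * ten (m ^ d3) 1"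
        by (simp add: Xpow Ypow)
      then show ?thesis using t2cyc by metis
    qed
    also have "\<dots> = \<tau>2 (ten (m ^ (d1 + d3)) 1 * ?W * ten 1 (m ^ d2))"
      by (simp add: mult.assoc[symmetric] mten power_add[symmetric] add.commute)
    finally show ?thesis by (simp add: K T_def)
  qed
  have inner2: "(\<Sum>(d1, d2, d3)\<in>{(d1, d2, d3). d1 + d2 + d3 + 2 = i}.
      \<tau>2 (ten 1 1 * ten m 1 ^ d1 * (u * flip v + v * flip u) * ten 1 m ^ d2 * ten m 1 ^ d3))
     = of_nat i * (\<Sum>(e1, e2)\<in>{(e1, e2). e1 + e2 + 1 = i - 1}. T e1 e2)" for i
  proof (cases "i < 2")
    case True
    then have e: "{(d1, d2, d3). d1 + d2 + d3 + 2 = i} = {}" by auto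
    have "i = 0 \<or> {(e1, e2). e1 + e2 + 1 = i - 1} = {}" using True by auto
    then show ?thesis unfolding e sum.empty by auto
  next
    case False
    then obtain n where n: "i = n + 2" by (metis add.commute le_Suc_ex not_less)
    have s1: "{(d1, d2, d3). d1 + d2 + d3 + 2 = i} = {(d1, d2, d3). d1 + d2 + d3 = n}" using n by auto
    have s2: "{(e1, e2). e1 + e2 + 1 = i - 1} = {(e1, e2). e1 + e2 = n}" using n by auto
    have "(\<Sum>(d1, d2, d3)\<in>{(d1, d2, d3). d1 + d2 + d3 + 2 = i}.
      \<tau>2 (ten 1 1 * ten m 1 ^ d1 * (u * flip v + v * flip u) * ten 1 m ^ d2 * ten m 1 ^ d3))
      = (\<Sum>(d1, d2, d3)\<in>{(d1, d2, d3). d1 + d2 + d3 = n}. T (d1 + d3) d2 + T d2 (d1 + d3))"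
      unfolding s1 ten11 K2 by simp
    also have "\<dots> = (\<Sum>b\<le>n. \<Sum>a\<le>n-b. T (a + (n - b - a)) b + T b (a + (n - b - a)))"
      by (rule triple_sum)
    also have "\<dots> = (\<Sum>b\<le>n. of_nat (n - b + 1) * (T (n - b) b + T b (n - b)))"
      by (rule sum.cong[OF refl]) simp
    also have "\<dots> = (\<Sum>b\<le>n. of_nat (n - b + 1) * T (n - b) b) + (\<Sum>b\<le>n. of_nat (n - b + 1) * T b (n - b))"
      by (simp add: distrib_left sum.distrib)
    also have "(\<Sum>b\<le>n. of_nat (n - b + 1) * T (n - b) b) = (\<Sum>b\<le>n. of_nat (b + 1) * T b (n - b))"
      by (subst sum_rev) (rule sum.cong[OF refl], simp)
    also have "(\<Sum>b\<le>n. of_nat (b + 1) * T b (n - b)) + (\<Sum>b\<le>n. of_nat (n - b + 1) * T b (n - b))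
        = (\<Sum>b\<le>n. of_nat (n + 2) * T b (n - b))"
      unfolding sum.distrib[symmetric] by (rule sum.cong[OF refl]) (simp add: distrib_right[symmetric])
    also have "\<dots> = of_nat i * (\<Sum>(e1, e2)\<in>{(e1, e2). e1 + e2 + 1 = i - 1}. T e1 e2)"
    proof -
      have ps: "(\<Sum>(e1, e2)\<in>{(e1, e2). e1 + e2 = n}. T e1 e2) = (\<Sum>b\<le>n. T b (n - b))" by (rule pair_sum)
      show ?thesis unfolding s2 ps using n by (simp add: sum_distrib_left add.commute)
    qed
    finally show ?thesis .
  qed
  have P2: "\<tau> d = \<tau>2 (flip v * nc_deriv sB ten (pderiv p) m * u)"
  proof -
    have "\<tau> d = \<tau> (1 * d)" by simp
    also have "\<dots> = Delta_rhs ten \<tau>2 flip u v p m 1" using assms(4) unfolding is_Delta_def by blast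
    also have "\<dots> = (\<Sum>i\<le>degree p. coeff p i * (of_nat i * (\<Sum>(e1, e2)\<in>{(e1, e2). e1 + e2 + 1 = i - 1}. T e1 e2)))"
      unfolding Delta_rhs_def using inner2 by simp
    also have "\<dots> = (\<Sum>j\<le>degree (pderiv p). coeff (pderiv p) j * (\<Sum>(e1, e2)\<in>{(e1, e2). e1 + e2 + 1 = j}. T e1 e2))"
      by (rule pderiv_reindex[symmetric])
    also have "\<dots> = \<tau>2 (flip v * nc_deriv sB ten (pderiv p) m * u)"
      unfolding nc_deriv_def sum_distrib_left sum_distrib_right additive_sum[of \<tau>2, OF t2add]
      by (simp add: sBl sBr t2sc T_def case_prod_unfold sum_distrib_left sum_distrib_right additive_sum[of \<tau>2, OF t2add])
    finally show ?thesis .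
  qed
  show ?thesis using P1 P2 by blast
qed


end
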